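(* Let $i\in J$. Let $\sigma_i$ be the permutation of $\{0,1,\dots,l\}$ such that $$t_iw_iw_0(v_0^\circ,v_1^\circ,\dots,v_l^\circ)=(v^\circ_{\sigma_i(0)},v^\circ_{\sigma_i(1)},\dots,v^\circ_{\sigma_i(l)}).$$ Then $\mathrm{sign}(\sigma_i)=(-1)^{l(w_iw_0)}$.
   Context: Setting: $G$ is the group of $K$-points of an adjoint quasi-simple group split over a non-archimedean local field $K$ (valuation $\omega$, $\omega(K^* )=\mathbb Z$), $T$ a maximal split torus, $\Phi$ its (reduced, irreducible) root system with basis $\alpha_1,\dots,\alpha_l$, $W$ the Weyl group, $V=X_*(T)\otimes\mathbb R$. $\tilde\alpha=\sum_i n_i\alpha_i$ is the highest root, $\varpi_1,\dots,\varpi_l$ the fundamental coweights, and $J=\{i: n_i=1\}$. The fundamental chamber $C_0=\{x\in V:\langle x,\alpha_j\rangle>0,\ \langle x,\tilde\alpha\rangle<1\}$ has vertices $v_0^\circ=0$ and $v_j^\circ=\varpi_j/n_j$ ($1\le j\le l$). $t_i\in T$ is an element with $\nu(t_i)=\varpi_i$, where $\nu:T\to X_*(T)$ satisfies $\langle\nu(t),\chi\rangle=-\omega(\chi(t))$; $t_i$ acts on $V$ (as affine space) by translation by $\varpi_i$ and $W$ acts linearly, so $t_iw_iw_0(x)=w_iw_0(x)+\varpi_i$. $w_0$ is the longest element of $W$ and $w_i$ the longest element of the Weyl group generated by the reflections $s_{\alpha_j}$, $j\ne i$; for $i\in J$ one has $t_iw_iw_0C_0=C_0$, so $t_iw_iw_0$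 permutes the vertices of $C_0$. $l(\cdot)$ is the length in $W$ with respect to the simple reflections. *)

theory Defs
  imports "HOL-Analysis.Analysis" "HOL-Combinatorics.Permutations"
begin

text \<open>Roots are realised as vectors in a Euclidean space V (the dual of V is identified
with V via the inner product); the pairing of x in V with a root a is x \<bullet> a.\<close>

definition rrefl :: "'a::euclidean_space \<Rightarrow> 'a \<Rightarrow> 'a" where
  "rrefl a x = x - (2 * (x \<bullet> a) / (a \<bullet> a)) *\<^sub>R a"

definition root_system :: "'a::euclidean_space set \<Rightarrow> bool" where
  "root_system \<Phi> \<longleftrightarrow> finite \<Phi> \<and> 0 \<notin> \<Phi> \<and> span \<Phi> = UNIV \<and>
     (\<forall>a\<in>\<Phi>. \<forall>b\<in>\<Phi>. rrefl a b \<in> \<Phi> \<and> 2 * (b \<bullet> a) / (a \<bullet> a) \<in> \<int>)"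

definition reduced_rs :: "'a::euclidean_space set \<Rightarrow> bool" where
  "reduced_rs \<Phi> \<longleftrightarrow> (\<forall>a\<in>\<Phi>. \<forall>c::real. c *\<^sub>R a \<in> \<Phi> \<longrightarrow> c = 1 \<or> c = -1)"

definition irreducible_rs :: "'a::euclidean_space set \<Rightarrow> bool" where
  "irreducible_rs \<Phi> \<longleftrightarrow> \<not> (\<exists>A B. A \<noteq> {} \<and> B \<noteq> {} \<and> A \<union> B = \<Phi> \<and> A \<inter> B = {} \<and>
       (\<forall>a\<in>A. \<forall>b\<in>B. a \<bullet> b = 0))"

definition rs_basis :: "'a::euclidean_space set \<Rightarrow> (nat \<Rightarrow> 'a) \<Rightarrow> nat \<Rightarrow> bool" where
  "rs_basis \<Phi> \<alpha> l \<longleftrightarrow> inj_on \<alpha> {1..l} \<and> \<alpha> ` {1..l} \<subseteq> \<Phi> \<and> independent (\<alpha> ` {1..l}) \<and>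
     (\<forall>b\<in>\<Phi>. \<exists>c::nat \<Rightarrow> int. b = (\<Sum>j=1..l. real_of_int (c j) *\<^sub>R \<alpha> j) \<and>
        ((\<forall>j\<in>{1..l}. c j \<ge> 0) \<or> (\<forall>j\<in>{1..l}. c j \<le> 0)))"

definition highest_root :: "'a::euclidean_space set \<Rightarrow> (nat \<Rightarrow> 'a) \<Rightarrow> nat \<Rightarrow> 'a \<Rightarrow> bool" where
  "highest_root \<Phi> \<alpha> l h \<longleftrightarrow> h \<in> \<Phi> \<and>
     (\<forall>b\<in>\<Phi>. \<exists>c::nat \<Rightarrow> nat. h - b = (\<Sum>j=1..l. real (c j) *\<^sub>R \<alpha> j))"

definition refl_word :: "(nat \<Rightarrow> 'a::euclidean_space) \<Rightarrow> nat list \<Rightarrow> 'a \<Rightarrow> 'a" where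
  "refl_word \<alpha> ws = foldr (\<lambda>j f. rrefl (\<alpha> j) \<circ> f) ws id"

definition parabolic :: "(nat \<Rightarrow> 'a::euclidean_space) \<Rightarrow> nat set \<Rightarrow> ('a \<Rightarrow> 'a) set" where
  "parabolic \<alpha> I = {refl_word \<alpha> ws | ws. set ws \<subseteq> I}"

definition word_length :: "(nat \<Rightarrow> 'a::euclidean_space) \<Rightarrow> nat set \<Rightarrow> ('a \<Rightarrow> 'a) \<Rightarrow> nat" where
  "word_length \<alpha> I w = (LEAST k. \<exists>ws. length ws = k \<and> set ws \<subseteq> I \<and> refl_word \<alpha> ws = w)"

inductive_set weyl_group :: "'a::euclidean_space set \<Rightarrow> ('a \<Rightarrow> 'a) set" for \<Phi> where
  weyl_id: "id \<in> weyl_group \<Phi>"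
| weyl_step: "w \<in> weyl_group \<Phi> \<Longrightarrow> a \<in> \<Phi> \<Longrightarrow> rrefl a \<circ> w \<in> weyl_group \<Phi>"

definition longest_in :: "('a \<Rightarrow> nat) \<Rightarrow> 'a set \<Rightarrow> 'a \<Rightarrow> bool" where
  "longest_in len S w \<longleftrightarrow> w \<in> S \<and> (\<forall>u\<in>S. len u \<le> len w)"

end

theory Submission
  imports Defs "Jordan_Normal_Form.Determinant"
begin

lemma mdl:
  fixes u w :: "nat \<Rightarrow> real"
  shows "det (1\<^sub>m n - mat n n (\<lambda>(r,c). u r * w c)) = 1 - (\<Sum>k<n. w k * u k)"
proof -
  define U where "U = mat n 1 (\<lambda>(r,_). u r)"
  define Wr where "Wr = mat 1 n (\<lambda>(_,c). w c)"
  define P where "P = mat n n (\<lambda>(r,c). u r * w c)"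
  define s where "s = (\<Sum>k<n. w k * u k)"
  define X where "X = four_block_mat (1\<^sub>m 1) Wr U (1\<^sub>m n)"
  define L where "L = four_block_mat (1\<^sub>m 1) (0\<^sub>m 1 n) U (1\<^sub>m n)"
  define R where "R = four_block_mat (1\<^sub>m 1) Wr (0\<^sub>m n 1) (1\<^sub>m n - P)"
  define L' where "L' = four_block_mat (mat 1 1 (\<lambda>_. 1 - s)) Wr (0\<^sub>m n 1) (1\<^sub>m n)"
  define R' where "R' = four_block_mat (1\<^sub>m 1) (0\<^sub>m 1 n) U (1\<^sub>m n)"
  have cU: "U \<in> carrier_mat n 1" and cW: "Wr \<in> carrier_mat 1 n" and cP: "P \<in> carrier_mat n n"
    by (auto simp: U_def Wr_def P_def)
  have "L * R = four_block_mat (1\<^sub>m 1 * 1\<^sub>m 1 + 0\<^sub>m 1 n * 0\<^sub>m n 1) (1\<^sub>m 1 * Wr + 0\<^sub>m 1 n * (1\<^sub>m n - P))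
     (U * 1\<^sub>m 1 + 1\<^sub>m n * 0\<^sub>m n 1) (U * Wr + 1\<^sub>m n * (1\<^sub>m n - P))"
    unfolding L_def R_def using cU cW cP by (intro mult_four_block_mat) auto
  also have "\<dots> = X" unfolding X_def
  proof (rule cong_four_block_mat)
    show "1\<^sub>m 1 * 1\<^sub>m 1 + 0\<^sub>m 1 n * 0\<^sub>m n 1 = (1\<^sub>m 1 :: real mat)"
      by (rule eq_matI) (auto simp: scalar_prod_def)
    show "1\<^sub>m 1 * Wr + 0\<^sub>m 1 n * (1\<^sub>m n - P) = Wr"
      using cW cP by (intro eq_matI) (auto simp: scalar_prod_def)
    show "U * 1\<^sub>m 1 + 1\<^sub>m n * 0\<^sub>m n 1 = U"
      using cU by (intro eq_matI) (auto simp: scalar_prod_def)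
    show "U * Wr + 1\<^sub>m n * (1\<^sub>m n - P) = 1\<^sub>m n"
      using cU cW cP by (intro eq_matI) (auto simp: scalar_prod_def U_def Wr_def P_def)
  qed
  finally have LR: "L * R = X" .
  have "L' * R' = four_block_mat (mat 1 1 (\<lambda>_. 1 - s) * 1\<^sub>m 1 + Wr * U) (mat 1 1 (\<lambda>_. 1 - s) * 0\<^sub>m 1 n + Wr * 1\<^sub>m n)
     (0\<^sub>m n 1 * 1\<^sub>m 1 + 1\<^sub>m n * U) (0\<^sub>m n 1 * 0\<^sub>m 1 n + 1\<^sub>m n * 1\<^sub>m n)"
    unfolding L'_def R'_def using cU cW cP by (intro mult_four_block_mat) auto
  also have "\<dots> = X" unfolding X_def
  proof (rule cong_four_block_mat)
    show "mat 1 1 (\<lambda>_. 1 - s) * 1\<^sub>m 1 + Wr * U = 1\<^sub>m 1"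
      using cU cW by (intro eq_matI) (auto simp: scalar_prod_def U_def Wr_def s_def atLeast0LessThan)
    show "mat 1 1 (\<lambda>_. 1 - s) * 0\<^sub>m 1 n + Wr * 1\<^sub>m n = Wr"
      using cW by (intro eq_matI) (auto simp: scalar_prod_def)
    show "0\<^sub>m n 1 * 1\<^sub>m 1 + 1\<^sub>m n * U = U"
      using cU by (intro eq_matI) (auto simp: scalar_prod_def)
    show "0\<^sub>m n 1 * 0\<^sub>m 1 n + 1\<^sub>m n * 1\<^sub>m n = (1\<^sub>m n :: real mat)"
      by (intro eq_matI) (auto simp: scalar_prod_def)
  qed
  finally have LR': "L' * R' = X" .
  have dL: "det L = 1" unfolding L_def
    using det_four_block_mat_upper_right_zero[of "1\<^sub>m 1" 1 "0\<^sub>m 1 n" n U "1\<^sub>m n"] cU by simp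
  have dR: "det R = det (1\<^sub>m n - P)" unfolding R_def
    using det_four_block_mat_lower_left_zero[of "1\<^sub>m 1" 1 Wr n "0\<^sub>m n 1" "1\<^sub>m n - P"] cW cP by (simp add: minus_carrier_mat)
  have dL': "det L' = 1 - s" unfolding L'_def
    using det_four_block_mat_lower_left_zero[of "mat 1 1 (\<lambda>_. 1 - s)" 1 Wr n "0\<^sub>m n 1" "1\<^sub>m n"] cW
    by (simp add: det_single)
  have dR': "det R' = 1" unfolding R'_def
    using det_four_block_mat_upper_right_zero[of "1\<^sub>m 1" 1 "0\<^sub>m 1 n" n U "1\<^sub>m n"] cU by simp
  have cL: "L \<in> carrier_mat (1+n) (1+n)" and cR: "R \<in> carrier_mat (1+n) (1+n)"
    and cL': "L' \<in> carrier_mat (1+n) (1+n)" and cR': "R' \<in> carrier_mat (1+n) (1+n)"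
    using cU cW cP by (auto simp: L_def R_def L'_def R'_def)
  have "det X = det (1\<^sub>m n - P)" using det_mult[OF cL cR] LR dL dR by simp
  moreover have "det X = 1 - s" using det_mult[OF cL' cR'] LR' dL' dR' by simp
  ultimately show ?thesis by (simp add: P_def s_def)
qed

lemma sum_Basis_list:
  fixes bs :: "'a::euclidean_space list"
  assumes d: "distinct bs" and s: "set bs = Basis"
  shows "(\<Sum>b\<in>Basis. f b) = (\<Sum>k<length bs. f (bs!k))"
proof -
  have "(\<Sum>b\<in>Basis. f b) = sum_list (map f bs)"
    using sum_list_distinct_conv_sum_set[OF d, of f] s by simp
  also have "\<dots> = (\<Sum>k<length bs. f (bs!k))"
    by (simp add: sum_list_sum_nth atLeast0LessThan)
  finally show ?thesis .
qed

lemma repr_list: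
  fixes bs :: "'a::euclidean_space list"
  assumes d: "distinct bs" and s: "set bs = Basis"
  shows "(\<Sum>k<length bs. inner x (bs!k) *\<^sub>R bs!k) = x"
  using euclidean_representation[of x] sum_Basis_list[OF d s, of "\<lambda>b. inner x b *\<^sub>R b"] by simp

lemma inner_list:
  fixes bs :: "'a::euclidean_space list"
  assumes d: "distinct bs" and s: "set bs = Basis"
  shows "inner x y = (\<Sum>k<length bs. inner x (bs!k) * inner y (bs!k))"
  using euclidean_inner[of x y] sum_Basis_list[OF d s, of "\<lambda>b. inner x b * inner y b"] by simp

lemma inner_bs:
  fixes bs :: "'a::euclidean_space list"
  assumes d: "distinct bs" and s: "set bs = Basis" and r: "r < length bs" and c: "c < length bs"
  shows "inner (bs!r) (bs!c) = (if r = c then 1 else 0)"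
proof -
  have "bs!r \<in> Basis" "bs!c \<in> Basis" using r c s nth_mem by blast+
  moreover have "bs!r = bs!c \<longleftrightarrow> r = c" using d r c nth_eq_iff_index_eq by blast
  ultimately show ?thesis by (simp add: inner_Basis)
qed

definition MT :: "'a::euclidean_space list \<Rightarrow> ('a \<Rightarrow> 'a) \<Rightarrow> real mat" where
  "MT bs g = mat (length bs) (length bs) (\<lambda>(r,c). inner (g (bs!r)) (bs!c))"

lemma MT_carrier: "MT bs g \<in> carrier_mat (length bs) (length bs)"
  by (simp add: MT_def)

lemma MT_comp:
  fixes bs :: "'a::euclidean_space list"
  assumes d: "distinct bs" and s: "set bs = Basis" and g: "linear g"
  shows "MT bs (g \<circ> h) = MT bs h * MT bs g"
proof (rule eq_matI)
  fix r c assume r: "r < dim_row (MT bs h * MT bs g)" and c: "c < dim_col (MT bs h * MT bs g)"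
  then have r': "r < length bs" and c': "c < length bs" by (auto simp: MT_def)
  have "(MT bs h * MT bs g) $$ (r,c) = (\<Sum>k<length bs. inner (h (bs!r)) (bs!k) * inner (g (bs!k)) (bs!c))"
    using r' c' by (simp add: MT_def scalar_prod_def atLeast0LessThan)
  also have "\<dots> = inner (g (\<Sum>k<length bs. inner (h (bs!r)) (bs!k) *\<^sub>R bs!k)) (bs!c)"
    by (simp add: linear_sum[OF g] linear_scale[OF g] inner_sum_left)
  also have "\<dots> = inner (g (h (bs!r))) (bs!c)" using repr_list[OF d s] by simp
  finally show "MT bs (g \<circ> h) $$ (r,c) = (MT bs h * MT bs g) $$ (r,c)"
    using r' c' by (simp add: MT_def)
qed (auto simp: MT_def)

lemma MT_id:
  fixes bs :: "'a::euclidean_space list"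
  assumes d: "distinct bs" and s: "set bs = Basis"
  shows "MT bs id = 1\<^sub>m (length bs)"
  by (rule eq_matI) (auto simp: MT_def inner_bs[OF d s])

lemma linear_rrefl: "linear (rrefl a)"
  unfolding rrefl_def
  by (rule linearI) (auto simp: inner_add_left algebra_simps add_divide_distrib)

lemma det_MT_rrefl:
  fixes bs :: "'a::euclidean_space list"
  assumes d: "distinct bs" and s: "set bs = Basis" and a: "a \<noteq> 0"
  shows "det (MT bs (rrefl a)) = -1"
proof -
  let ?n = "length bs"
  define u where "u r = 2 * inner (bs!r) a / inner a a" for r
  define w where "w c = inner a (bs!c)" for c
  have "MT bs (rrefl a) = 1\<^sub>m ?n - mat ?n ?n (\<lambda>(r,c). u r * w c)"
    by (rule eq_matI) (auto simp: MT_def rrefl_def u_def w_def inner_diff_left inner_bs[OF d s])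
  then have "det (MT bs (rrefl a)) = 1 - (\<Sum>k<?n. w k * u k)" by (simp add: mdl)
  also have "(\<Sum>k<?n. w k * u k) = 2 * (\<Sum>k<?n. inner a (bs!k) * inner a (bs!k)) / inner a a"
    by (simp add: u_def w_def sum_divide_distrib sum_distrib_left inner_commute mult_ac)
  also have "\<dots> = 2 * inner a a / inner a a" using inner_list[OF d s, of a a] by simp
  also have "\<dots> = 2" using a by simp
  finally show ?thesis by simp
qed

lemma refl_word_Cons: "refl_word \<alpha> (j # ws) = rrefl (\<alpha> j) \<circ> refl_word \<alpha> ws"
  by (simp add: refl_word_def)

lemma refl_word_append: "refl_word \<alpha> (xs @ ys) = refl_word \<alpha> xs \<circ> refl_word \<alpha> ys"
  by (induction xs) (auto simp: refl_word_def)

lemma linear_refl_word: "linear (refl_word \<alpha> ws)"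
  by (induction ws) (auto simp: refl_word_def linear_rrefl intro: linear_compose[unfolded o_def] linear_id[unfolded id_def])

lemma det_MT_word:
  fixes bs :: "'a::euclidean_space list"
  assumes d: "distinct bs" and s: "set bs = Basis" and nz: "\<forall>j\<in>set ws. \<alpha> j \<noteq> 0"
  shows "det (MT bs (refl_word \<alpha> ws)) = (-1) ^ length ws"
  using nz
proof (induction ws)
  case Nil
  have "refl_word \<alpha> [] = id" by (simp add: refl_word_def)
  then show ?case using MT_id[OF d s] det_one by (metis list.size(3) power_0)
next
  case (Cons j ws)
  have "det (MT bs (refl_word \<alpha> (j # ws))) = det (MT bs (refl_word \<alpha> ws) * MT bs (rrefl (\<alpha> j)))"
    by (simp add: refl_word_Cons MT_comp[OF d s linear_rrefl])
  also have "\<dots> = det (MT bs (refl_word \<alpha> ws)) * det (MT bs (rrefl (\<alpha> j)))"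
    by (rule det_mult) (rule MT_carrier)+
  also have "\<dots> = (-1) ^ length (j # ws)" using Cons det_MT_rrefl[OF d s] by simp
  finally show ?case .
qed

lemma rrefl_invol: "a \<noteq> 0 \<Longrightarrow> rrefl a (rrefl a x) = x"
  by (simp add: rrefl_def inner_diff_left algebra_simps)

lemma rrefl_inner: "a \<noteq> 0 \<Longrightarrow> inner (rrefl a x) (rrefl a y) = inner x y"
proof -
  assume a: "a \<noteq> 0"
  define s where "s = 2 * inner x a / inner a a"
  define t where "t = 2 * inner y a / inner a a"
  have rx: "rrefl a x = x - s *\<^sub>R a" and ry: "rrefl a y = y - t *\<^sub>R a"
    by (simp_all add: rrefl_def s_def t_def)
  have "inner (rrefl a x) (rrefl a y) = inner x y - t * inner x a - s * inner a y + s * t * inner a a"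
    unfolding rx ry by (simp add: inner_diff_left inner_diff_right algebra_simps)
  also have "\<dots> = inner x y" using a
    by (simp add: s_def t_def inner_commute[of a y] field_simps)
  finally show ?thesis .
qed

lemma rrefl_conj:
  assumes a: "a \<noteq> 0"
  shows "rrefl (rrefl a b) = rrefl a \<circ> rrefl b \<circ> rrefl a"
proof
  fix x
  let ?g = "rrefl a"
  have lg: "linear ?g" by (rule linear_rrefl)
  have 1: "inner x (?g b) = inner (?g x) b"
    using rrefl_inner[OF a, of "?g x" b] rrefl_invol[OF a] by simp
  have 2: "inner (?g b) (?g b) = inner b b" by (rule rrefl_inner[OF a])
  have "(?g \<circ> rrefl b \<circ> ?g) x = ?g (?g x - (2 * inner (?g x) b / inner b b) *\<^sub>R b)"
    by (simp only: comp_apply rrefl_def[of b])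
  also have "\<dots> = x - (2 * inner (?g x) b / inner b b) *\<^sub>R ?g b"
    by (simp only: linear_diff[OF lg] linear_scale[OF lg] rrefl_invol[OF a])
  also have "\<dots> = rrefl (?g b) x" by (simp only: rrefl_def[of "?g b" x] 1 2)
  finally show "rrefl (?g b) x = (?g \<circ> rrefl b \<circ> ?g) x" by simp
qed

lemma rrefl_neg: "rrefl (- a) = rrefl a"
  by (rule ext) (simp add: rrefl_def)

lemma rrefl_self: "a \<noteq> 0 \<Longrightarrow> rrefl a a = - a"
  by (simp add: rrefl_def algebra_simps scaleR_2)

lemma coef_unique:
  fixes \<alpha> :: "nat \<Rightarrow> 'a::euclidean_space"
  assumes basis: "rs_basis \<Phi> \<alpha> l"
    and eq: "(\<Sum>j=1..l. c j *\<^sub>R \<alpha> j) = (\<Sum>j=1..l. d j *\<^sub>R \<alpha> j)"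
    and j: "j \<in> {1..l}"
  shows "c j = d j"
proof -
  have inj: "inj_on \<alpha> {1..l}" and ind: "independent (\<alpha> ` {1..l})"
    using basis by (auto simp: rs_basis_def)
  define u where "u v = c (the_inv_into {1..l} \<alpha> v) - d (the_inv_into {1..l} \<alpha> v)" for v
  have "(\<Sum>v\<in>\<alpha> ` {1..l}. u v *\<^sub>R v) = (\<Sum>i=1..l. u (\<alpha> i) *\<^sub>R \<alpha> i)"
    using sum.reindex[OF inj, of "\<lambda>v. u v *\<^sub>R v"] by simp
  also have "\<dots> = (\<Sum>i=1..l. (c i - d i) *\<^sub>R \<alpha> i)"
  proof (rule sum.cong)
    fix i assume "i \<in> {1..l}"
    then have "the_inv_into {1..l} \<alpha> (\<alpha> i) = i" by (rule the_inv_into_f_f[OF inj])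
    then show "u (\<alpha> i) *\<^sub>R \<alpha> i = (c i - d i) *\<^sub>R \<alpha> i" by (simp add: u_def)
  qed simp
  also have "\<dots> = 0" using eq by (simp add: scaleR_diff_left sum_subtractf)
  finally have "u (\<alpha> j) = 0"
    using independentD[OF ind, of "\<alpha> ` {1..l}" u "\<alpha> j"] j by auto
  moreover have "the_inv_into {1..l} \<alpha> (\<alpha> j) = j" by (rule the_inv_into_f_f[OF inj j])
  ultimately show ?thesis by (simp add: u_def)
qed

definition SW :: "(nat \<Rightarrow> 'a::euclidean_space) \<Rightarrow> nat \<Rightarrow> ('a \<Rightarrow> 'a) set" where
  "SW \<alpha> l = {refl_word \<alpha> ws | ws. set ws \<subseteq> {1..l}}"

lemma SW_comp: "f \<in> SW \<alpha> l \<Longrightarrow> g \<in> SW \<alpha> l \<Longrightarrow> f \<circ> g \<in> SW \<alpha> l"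
proof -
  assume "f \<in> SW \<alpha> l" "g \<in> SW \<alpha> l"
  then obtain xs ys where "set xs \<subseteq> {1..l}" "f = refl_word \<alpha> xs" "set ys \<subseteq> {1..l}" "g = refl_word \<alpha> ys"
    unfolding SW_def by blast
  moreover have "set (xs @ ys) \<subseteq> {1..l}" using calculation by simp
  ultimately have "f \<circ> g = refl_word \<alpha> (xs @ ys) \<and> set (xs @ ys) \<subseteq> {1..l}"
    by (simp add: refl_word_append)
  then show ?thesis unfolding SW_def by blast
qed

lemma SW_simple: "j \<in> {1..l} \<Longrightarrow> rrefl (\<alpha> j) \<in> SW \<alpha> l"
  unfolding SW_def by (auto intro!: exI[where x="[j]"] simp: refl_word_def)

lemma pos_root_refl:
  fixes \<alpha> :: "nat \<Rightarrow> 'a::euclidean_space"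
  assumes rs: "root_system \<Phi>" and red: "reduced_rs \<Phi>" and basis: "rs_basis \<Phi> \<alpha> l"
  shows "b \<in> \<Phi> \<Longrightarrow> b = (\<Sum>j=1..l. real_of_int (c j) *\<^sub>R \<alpha> j) \<Longrightarrow> (\<forall>j\<in>{1..l}. c j \<ge> 0)
    \<Longrightarrow> rrefl b \<in> SW \<alpha> l"
proof (induction "nat (\<Sum>j=1..l. c j)" arbitrary: b c rule: less_induct)
  case less
  note bP = less.prems(1) and bc = less.prems(2) and cpos = less.prems(3)
  have aP: "\<alpha> j \<in> \<Phi>" if "j \<in> {1..l}" for j using basis that by (auto simp: rs_basis_def)
  have z: "0 \<notin> \<Phi>" using rs by (simp add: root_system_def)
  have anz: "\<alpha> j \<noteq> 0" if "j \<in> {1..l}" for j using aP[OF that] z by auto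
  have bnz: "b \<noteq> 0" using bP z by auto
  have "inner b b = (\<Sum>j=1..l. real_of_int (c j) * inner (\<alpha> j) b)"
    by (subst (1) bc) (simp add: inner_sum_left)
  moreover have "inner b b > 0" using bnz by simp
  ultimately obtain j where j: "j \<in> {1..l}" and pj: "real_of_int (c j) * inner (\<alpha> j) b > 0"
    by (metis (no_types, lifting) not_less sum_nonpos)
  have "c j \<ge> 0" using cpos j by blast
  then have cj: "c j > 0" and ajb: "inner (\<alpha> j) b > 0"
    using pj by (auto simp: zero_less_mult_iff)
  show ?case
  proof (cases "\<forall>k\<in>{1..l}-{j}. c k = 0")
    case True
    have "b = (\<Sum>k\<in>{1..l}. (if k = j then real_of_int (c j) *\<^sub>R \<alpha> j else 0))"
      by (subst bc, rule sum.cong) (use True in auto)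
    also have "\<dots> = real_of_int (c j) *\<^sub>R \<alpha> j" using j by simp
    finally have bj: "b = real_of_int (c j) *\<^sub>R \<alpha> j" .
    have "real_of_int (c j) = 1 \<or> real_of_int (c j) = -1"
      using red aP[OF j] bP bj by (auto simp: reduced_rs_def)
    then have "b = \<alpha> j" using bj cj by auto
    then show ?thesis using SW_simple[OF j] by simp
  next
    case False
    then obtain k where k: "k \<in> {1..l}" "k \<noteq> j" "c k > 0" using cpos by force
    let ?s = "rrefl (\<alpha> j)"
    define b' where "b' = ?s b"
    have b'P: "b' \<in> \<Phi>" using rs aP[OF j] bP by (auto simp: root_system_def b'_def)
    have "2 * inner b (\<alpha> j) / inner (\<alpha> j) (\<alpha> j) \<in> \<int>"
      using rs aP[OF j] bP by (auto simp: root_system_def)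
    then obtain m where m: "2 * inner b (\<alpha> j) / inner (\<alpha> j) (\<alpha> j) = real_of_int m"
      by (auto elim: Ints_cases)
    have "2 * inner b (\<alpha> j) / inner (\<alpha> j) (\<alpha> j) > 0"
      using ajb anz[OF j] by (simp add: inner_commute)
    then have mpos: "m > 0" using m by simp
    define c' where "c' = c(j := c j - m)"
    have b'c: "b' = (\<Sum>i=1..l. real_of_int (c' i) *\<^sub>R \<alpha> i)"
    proof -
      have "(\<Sum>i=1..l. real_of_int (c' i) *\<^sub>R \<alpha> i)
          = (\<Sum>i=1..l. real_of_int (c i) *\<^sub>R \<alpha> i - (if i = j then real_of_int m *\<^sub>R \<alpha> j else 0))"
        by (rule sum.cong) (auto simp: c'_def scaleR_diff_left)
      also have "\<dots> = b - real_of_int m *\<^sub>R \<alpha> j"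
        using j by (simp add: sum_subtractf bc)
      finally show ?thesis by (simp add: b'_def rrefl_def m)
    qed
    obtain d where d: "b' = (\<Sum>i=1..l. real_of_int (d i) *\<^sub>R \<alpha> i)"
      and dsgn: "(\<forall>i\<in>{1..l}. d i \<ge> 0) \<or> (\<forall>i\<in>{1..l}. d i \<le> 0)"
      using basis b'P unfolding rs_basis_def by blast
    have dc: "d i = c' i" if "i \<in> {1..l}" for i
      using coef_unique[OF basis _ that, of "\<lambda>i. real_of_int (d i)" "\<lambda>i. real_of_int (c' i)"] d b'c
      by simp
    have "d k > 0" using dc[OF k(1)] k by (simp add: c'_def)
    then have c'pos: "\<forall>i\<in>{1..l}. c' i \<ge> 0" using dsgn dc k(1) by force
    have sc': "(\<Sum>i=1..l. c' i) = (\<Sum>i=1..l. c i) - m"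
    proof -
      have "(\<Sum>i=1..l. c' i) = (\<Sum>i=1..l. c i - (if i = j then m else 0))"
        by (rule sum.cong) (auto simp: c'_def)
      also have "\<dots> = (\<Sum>i=1..l. c i) - m" using j by (simp add: sum_subtractf)
      finally show ?thesis .
    qed
    have "(\<Sum>i=1..l. c' i) \<ge> 0" using sum_nonneg[of "{1..l}" c'] c'pos by blast
    then have lt: "nat (\<Sum>i=1..l. c' i) < nat (\<Sum>i=1..l. c i)" using sc' mpos by simp
    have IH: "rrefl b' \<in> SW \<alpha> l" using less.hyps[OF lt b'P b'c c'pos] .
    have "rrefl b = rrefl (?s b')" using rrefl_invol[OF anz[OF j]] by (simp add: b'_def)
    also have "\<dots> = ?s \<circ> rrefl b' \<circ> ?s" by (rule rrefl_conj[OF anz[OF j]])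
    finally show ?thesis using IH SW_simple[OF j] SW_comp by metis
  qed
qed

lemma root_refl_SW:
  fixes \<alpha> :: "nat \<Rightarrow> 'a::euclidean_space"
  assumes rs: "root_system \<Phi>" and red: "reduced_rs \<Phi>" and basis: "rs_basis \<Phi> \<alpha> l"
    and bP: "b \<in> \<Phi>"
  shows "rrefl b \<in> SW \<alpha> l"
proof -
  obtain c where c: "b = (\<Sum>j=1..l. real_of_int (c j) *\<^sub>R \<alpha> j)"
    and sg: "(\<forall>j\<in>{1..l}. c j \<ge> 0) \<or> (\<forall>j\<in>{1..l}. c j \<le> 0)"
    using basis bP unfolding rs_basis_def by blast
  show ?thesis
  proof (cases "\<forall>j\<in>{1..l}. c j \<ge> 0")
    case True
    then show ?thesis using pos_root_refl[OF rs red basis bP c] by blast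
  next
    case False
    then have neg: "\<forall>j\<in>{1..l}. - c j \<ge> 0" using sg by auto
    have bnz: "b \<noteq> 0" using bP rs by (auto simp: root_system_def)
    have "rrefl b b \<in> \<Phi>" using rs bP by (simp add: root_system_def)
    then have "- b \<in> \<Phi>" using rrefl_self[OF bnz] by simp
    moreover have "- b = (\<Sum>j=1..l. real_of_int (- c j) *\<^sub>R \<alpha> j)"
      by (simp add: c sum_negf)
    ultimately have "rrefl (- b) \<in> SW \<alpha> l"
      using pos_root_refl[OF rs red basis, of "-b" "\<lambda>j. - c j"] neg by blast
    then show ?thesis by (simp add: rrefl_neg)
  qed
qed

lemma weyl_SW:
  fixes \<alpha> :: "nat \<Rightarrow> 'a::euclidean_space"
  assumes rs: "root_system \<Phi>" and red: "reduced_rs \<Phi>" and basis: "rs_basis \<Phi> \<alpha> l"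
  shows "w \<in> weyl_group \<Phi> \<Longrightarrow> w \<in> SW \<alpha> l"
proof (induction rule: weyl_group.induct)
  case weyl_id
  show ?case unfolding SW_def by (auto intro!: exI[where x="[]"] simp: refl_word_def)
next
  case (weyl_step w a)
  then show ?case using root_refl_SW[OF rs red basis] SW_comp by blast
qed

lemma highest_coef_pos:
  fixes \<alpha> :: "nat \<Rightarrow> 'a::euclidean_space"
  assumes basis: "rs_basis \<Phi> \<alpha> l" and hr: "highest_root \<Phi> \<alpha> l h"
    and hn: "h = (\<Sum>j=1..l. real (n j) *\<^sub>R \<alpha> j)" and k: "k \<in> {1..l}"
  shows "n k \<noteq> 0"
proof -
  have "\<alpha> k \<in> \<Phi>" using basis k by (auto simp: rs_basis_def)
  then obtain c :: "nat \<Rightarrow> nat" where c: "h - \<alpha> k = (\<Sum>j=1..l. real (c j) *\<^sub>R \<alpha> j)"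
    using hr unfolding highest_root_def by blast
  have "(\<Sum>j=1..l. real (c j + (if j = k then 1 else 0)) *\<^sub>R \<alpha> j)
      = (\<Sum>j=1..l. real (c j) *\<^sub>R \<alpha> j + (if j = k then \<alpha> k else 0))"
    by (rule sum.cong) (auto simp: scaleR_add_left)
  also have "\<dots> = h"
  proof -
    have e: "(\<Sum>j=1..l. real (c j) *\<^sub>R \<alpha> j) + \<alpha> k = h" by (subst c[symmetric]) simp
    show ?thesis using k e by (simp add: sum.distrib)
  qed
  finally have "(\<Sum>j=1..l. real (n j) *\<^sub>R \<alpha> j) = (\<Sum>j=1..l. real (c j + (if j = k then 1 else 0)) *\<^sub>R \<alpha> j)"
    using hn by simp
  from coef_unique[OF basis this k] show ?thesis by simp
qed

theorem mainTheorem4: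
  fixes \<Phi> :: "'a::euclidean_space set"
    and \<alpha> :: "nat \<Rightarrow> 'a" and l :: nat and h :: 'a and n :: "nat \<Rightarrow> nat"
    and cw :: "nat \<Rightarrow> 'a" and w0 wi :: "'a \<Rightarrow> 'a" and i :: nat
    and v :: "nat \<Rightarrow> 'a" and \<sigma> :: "nat \<Rightarrow> nat"
  assumes rs: "root_system \<Phi>" and red: "reduced_rs \<Phi>" and irr: "irreducible_rs \<Phi>"
    and dim: "l = DIM('a)"
    and basis: "rs_basis \<Phi> \<alpha> l"
    and hr: "highest_root \<Phi> \<alpha> l h"
    and hn: "h = (\<Sum>j=1..l. real (n j) *\<^sub>R \<alpha> j)"
    and cow: "\<forall>j\<in>{1..l}. \<forall>k\<in>{1..l}. cw j \<bullet> \<alpha> k = (if j = k then 1 else 0)"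
    and vdef: "\<forall>k. v k = (if k = 0 then 0 else (1 / real (n k)) *\<^sub>R cw k)"
    and w0: "longest_in (word_length \<alpha> {1..l}) (weyl_group \<Phi>) w0"
    and wi: "longest_in (word_length \<alpha> ({1..l} - {i})) (parabolic \<alpha> ({1..l} - {i})) wi"
    and iJ: "i \<in> {1..l}" "n i = 1"
    and \<sigma>: "\<sigma> permutes {0..l}"
    and \<sigma>v: "\<forall>k\<in>{0..l}. wi (w0 (v k)) + cw i = v (\<sigma> k)"
  shows "sign \<sigma> = (-1) ^ word_length \<alpha> {1..l} (wi \<circ> w0)"
proof -
  have anz: "\<alpha> j \<noteq> 0" if "j \<in> {1..l}" for j
  proof -
    have "\<alpha> ` {1..l} \<subseteq> \<Phi>" using basis unfolding rs_basis_def by blast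
    then have "\<alpha> j \<in> \<Phi>" using that by blast
    moreover have "0 \<notin> \<Phi>" using rs unfolding root_system_def by blast
    ultimately show ?thesis by auto
  qed
  have "w0 \<in> weyl_group \<Phi>" using w0 unfolding longest_in_def by blast
  then have "w0 \<in> SW \<alpha> l" by (rule weyl_SW[OF rs red basis])
  moreover have "wi \<in> SW \<alpha> l"
  proof -
    have "wi \<in> parabolic \<alpha> ({1..l} - {i})" using wi unfolding longest_in_def by blast
    then obtain us where us: "wi = refl_word \<alpha> us" "set us \<subseteq> {1..l} - {i}"
      unfolding parabolic_def by blast
    then have "set us \<subseteq> {1..l}" by blast
    then show ?thesis using us(1) unfolding SW_def by blast
  qed
  ultimately have "wi \<circ> w0 \<in> SW \<alpha> l" by (intro SW_comp)
  then obtain vs where vs: "wi \<circ> w0 = refl_word \<alpha> vs" "set vs \<subseteq> {1..l}"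
    unfolding SW_def by blast
  have ex: "\<exists>k ws. length ws = k \<and> set ws \<subseteq> {1..l} \<and> refl_word \<alpha> ws = wi \<circ> w0"
    using vs by (intro exI[of _ "length vs"] exI[of _ vs]) simp
  define K where "K = word_length \<alpha> {1..l} (wi \<circ> w0)"
  have "\<exists>ws. length ws = K \<and> set ws \<subseteq> {1..l} \<and> refl_word \<alpha> ws = wi \<circ> w0"
  proof -
    have "\<exists>k. \<exists>ws. length ws = k \<and> set ws \<subseteq> {1..l} \<and> refl_word \<alpha> ws = wi \<circ> w0" using ex .
    from LeastI_ex[OF this] show ?thesis unfolding K_def word_length_def .
  qed
  then obtain ws where ws: "length ws = K" "set ws \<subseteq> {1..l}" "refl_word \<alpha> ws = wi \<circ> w0"
    by blast
  define W where "W = wi \<circ> w0"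
  have linW: "linear W" using linear_refl_word[of \<alpha> ws] ws(3) unfolding W_def by simp
  obtain bs :: "'a list" where d: "distinct bs" and s: "set bs = Basis"
    using finite_distinct_list[OF finite_Basis] by blast
  have lbs: "length bs = l" using distinct_card[OF d] s dim by simp
  have detW: "det (MT bs W) = (-1) ^ K"
  proof -
    have "\<forall>j\<in>set ws. \<alpha> j \<noteq> 0" using ws(2) anz by blast
    then have "det (MT bs (refl_word \<alpha> ws)) = (-1) ^ length ws" by (rule det_MT_word[OF d s])
    then show ?thesis using ws(1) ws(3) unfolding W_def by simp
  qed
  define N where "N = Suc l"
  define B where "B = mat N N (\<lambda>(c,j). if j = 0 then 1 else inner (v c) (bs!(j-1)))"
  define G where "G = four_block_mat (1\<^sub>m 1) (mat 1 l (\<lambda>(_,j). inner (cw i) (bs!j))) (0\<^sub>m l 1) (MT bs W)"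
  have cB: "B \<in> carrier_mat N N" unfolding B_def by (rule mat_carrier)
  have cMT: "MT bs W \<in> carrier_mat l l" using MT_carrier[of bs W] unfolding lbs .
  have "G \<in> carrier_mat (1 + l) (1 + l)" unfolding G_def by (rule four_block_carrier_mat[OF one_carrier_mat cMT])
  then have cG: "G \<in> carrier_mat N N" unfolding N_def by simp
  have nz: "n k \<noteq> 0" if "k \<in> {1..l}" for k using highest_coef_pos[OF basis hr hn that] .
  have Bc0: "B $$ (c,0) = 1" if "c < N" for c using that by (simp add: B_def N_def)
  have BcS: "B $$ (c, Suc k) = inner (v c) (bs!k)" if "c < N" "k < l" for c k
    using that by (simp add: B_def N_def)
  have dG1: "dim_row (MT bs W) = l" "dim_col (MT bs W) = l" using cMT by auto
  have G00: "G $$ (0,0) = 1" by (simp add: G_def dG1)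
  have GS0: "G $$ (Suc k, 0) = 0" if "k < l" for k using that by (simp add: G_def dG1)
  have G0S: "G $$ (0, Suc k) = inner (cw i) (bs!k)" if "k < l" for k using that by (simp add: G_def dG1)
  have GSS: "G $$ (Suc k, Suc k') = inner (W (bs!k)) (bs!k')" if "k < l" "k' < l" for k k'
  proof -
    have "G $$ (Suc k, Suc k') = MT bs W $$ (k, k')" using that by (simp add: G_def dG1)
    also have "\<dots> = inner (W (bs!k)) (bs!k')" using that lbs by (simp add: MT_def)
    finally show ?thesis .
  qed
  have BG: "B * G = mat N N (\<lambda>(c,j). B $$ (\<sigma> c, j))"
  proof (rule eq_matI)
    fix c j assume c: "c < dim_row (mat N N (\<lambda>(c,j). B $$ (\<sigma> c, j)))"
      and j: "j < dim_col (mat N N (\<lambda>(c,j). B $$ (\<sigma> c, j)))"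
    then have c: "c < N" and j: "j < N" by auto
    have sc: "\<sigma> c < N" using \<sigma> c unfolding N_def
      by (metis atLeastAtMost_iff less_Suc_eq_le permutes_in_image zero_le)
    have "(B * G) $$ (c,j) = (\<Sum>k<N. B $$ (c,k) * G $$ (k,j))"
      using c j cB cG by (simp add: scalar_prod_def atLeast0LessThan)
    also have "\<dots> = B $$ (c,0) * G $$ (0,j) + (\<Sum>k<l. B $$ (c,Suc k) * G $$ (Suc k,j))"
      unfolding N_def by (rule sum.lessThan_Suc_shift)
    also have "\<dots> = B $$ (\<sigma> c, j)"
    proof (cases j)
      case 0
      have "(\<Sum>k<l. B $$ (c,Suc k) * G $$ (Suc k,j)) = 0"
        using 0 by (intro sum.neutral) (simp add: GS0)
      then show ?thesis using 0 Bc0[OF c] Bc0[OF sc] G00 by simp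
    next
      case (Suc j')
      have j': "j' < l" using j Suc N_def by simp
      have "(\<Sum>k<l. B $$ (c,Suc k) * G $$ (Suc k,j)) = (\<Sum>k<l. inner (v c) (bs!k) * inner (W (bs!k)) (bs!j'))"
      proof (rule sum.cong[OF refl])
        fix k assume "k \<in> {..<l}"
        then have k: "k < l" by simp
        show "B $$ (c,Suc k) * G $$ (Suc k,j) = inner (v c) (bs!k) * inner (W (bs!k)) (bs!j')"
          using BcS[OF c k] GSS[OF k j'] Suc by simp
      qed
      also have "\<dots> = inner (W (\<Sum>k<l. inner (v c) (bs!k) *\<^sub>R bs!k)) (bs!j')"
        by (simp add: linear_sum[OF linW] linear_scale[OF linW] inner_sum_left)
      also have "\<dots> = inner (W (v c)) (bs!j')" using repr_list[OF d s, of "v c"] lbs by simp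
      finally have "B $$ (c,0) * G $$ (0,j) + (\<Sum>k<l. B $$ (c,Suc k) * G $$ (Suc k,j))
          = inner (cw i) (bs!j') + inner (W (v c)) (bs!j')"
        using Suc Bc0[OF c] G0S[OF j'] by simp
      also have "\<dots> = inner (v (\<sigma> c)) (bs!j')"
      proof -
        have "c \<in> {0..l}" using c N_def by simp
        then have "W (v c) + cw i = v (\<sigma> c)" using \<sigma>v unfolding W_def by simp
        then show ?thesis by (metis add.commute inner_add_left)
      qed
      finally show ?thesis using Suc BcS[OF sc j'] by simp
    qed
    finally show "(B * G) $$ (c,j) = mat N N (\<lambda>(c,j). B $$ (\<sigma> c, j)) $$ (c,j)"
      using c j by simp
  qed (use cB cG in auto)
  have \<sigma>N: "\<sigma> permutes {0..<N}" using \<sigma> unfolding N_def by (simp add: atLeastLessThanSuc_atLeastAtMost)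
  have d1: "det (B * G) = signof \<sigma> * det B"
    using BG det_permute_rows[OF cB \<sigma>N] by simp
  have dG: "det G = det (MT bs W)" unfolding G_def
    using det_four_block_mat_lower_left_zero[of "1\<^sub>m 1" 1 "mat 1 l (\<lambda>(_,j). inner (cw i) (bs!j))" l "0\<^sub>m l 1" "MT bs W"] cMT
    by simp
  have d2: "det (B * G) = det B * det (MT bs W)" using det_mult[OF cB cG] dG by simp
  have dB: "det B \<noteq> 0"
  proof
    assume "det B = 0"
    then have "det (transpose_mat B) = 0" using det_transpose[OF cB] by simp
    then obtain x where x: "x \<in> carrier_vec N" "x \<noteq> 0\<^sub>v N" "transpose_mat B *\<^sub>v x = 0\<^sub>v N"
      using det_0_iff_vec_prod_zero_field[of "transpose_mat B" N] cB by auto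
    have dx: "dim_vec x = N" using x(1) by simp
    have row: "(\<Sum>c<N. B $$ (c,j) * x $ c) = 0" if "j < N" for j
    proof -
      have "(transpose_mat B *\<^sub>v x) $ j = 0" using x(3) that by simp
      then show ?thesis using that cB dx by (simp add: scalar_prod_def atLeast0LessThan)
    qed
    define S where "S = (\<Sum>c<N. x $ c *\<^sub>R v c)"
    have Sb: "inner S (bs!j) = 0" if "j < l" for j
    proof -
      have "inner S (bs!j) = (\<Sum>c<N. B $$ (c,Suc j) * x $ c)"
        unfolding S_def inner_sum_left using that by (intro sum.cong) (auto simp: B_def N_def)
      then show ?thesis using row[of "Suc j"] that N_def by simp
    qed
    have "inner S S = 0" using inner_list[OF d s, of S S] Sb lbs by simp
    then have S0: "S = 0" by simp
    have xk: "x $ k = 0" if k: "k \<in> {1..l}" for k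
    proof -
      have "inner S (\<alpha> k) = (\<Sum>c<N. (if c = k then x $ k / real (n k) else 0))"
        unfolding S_def inner_sum_left
      proof (intro sum.cong refl)
        fix c assume "c \<in> {..<N}"
        then have "c \<le> l" by (simp add: N_def)
        then show "inner (x $ c *\<^sub>R v c) (\<alpha> k) = (if c = k then x $ k / real (n k) else 0)"
          using vdef cow k by (cases "c = 0") auto
      qed
      also have "\<dots> = x $ k / real (n k)" using k by (simp add: N_def)
      finally show ?thesis using S0 nz[OF k] by simp
    qed
    have "(\<Sum>c<N. B $$ (c,0) * x $ c) = 0" using row[of 0] by (simp add: N_def)
    then have "(\<Sum>c<N. x $ c) = 0" by (simp add: B_def N_def)
    moreover have "(\<Sum>c<N. x $ c) = x $ 0 + (\<Sum>c<l. x $ Suc c)"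
      unfolding N_def by (rule sum.lessThan_Suc_shift)
    moreover have "(\<Sum>c<l. x $ Suc c) = 0" using xk by (intro sum.neutral) auto
    ultimately have x0: "x $ 0 = 0" by simp
    have "x = 0\<^sub>v N"
    proof (rule eq_vecI)
      fix k assume "k < dim_vec (0\<^sub>v N)"
      then have "k < N" by simp
      then show "x $ k = 0\<^sub>v N $ k" using x0 xk[of k] by (cases "k = 0") (auto simp: N_def)
    qed (simp add: dx)
    then show False using x(2) by simp
  qed
  have "(signof \<sigma> :: real) = det (MT bs W)" using d1 d2 dB by simp
  then have "real_of_int (sign \<sigma>) = real_of_int ((-1) ^ K)" using detW by simp
  then show ?thesis unfolding K_def by (simp only: of_int_eq_iff)
qed

end
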